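(* Let $(V,\mu)$ be an infinite, connected, locally finite weighted graph, let $1<s<\infty$, and let $\sigma\in\ell^+(V)$ satisfy $G\sigma(x)<\infty$ for every $x\in V$. Then for all $x\in V$, $$[G\sigma(x)]^s\le s\,G\big[(G\sigma)^{s-1}\sigma\big](x).$$
   Context: Weighted graph: $\mu_{xy}=\mu_{yx}\ge0$, $\mu_{xy}>0$ iff $x\sim y$, $\mu(x)=\sum_{y\sim x}\mu_{xy}$. Random walk $P(x,y)=\mu_{xy}/\mu(x)$, $P_n(x,y)=\mathbb P_x[X_n=y]$, Green function $g(x,y)=\sum_{n\ge0}P_n(x,y)/\mu(y)\in(0,\infty]$, Green operator $Gf(x)=\sum_{y\in V}g(x,y)f(y)\mu(y)$. *)

theory Defs
  imports "HOL-Analysis.Analysis"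
begin

definition neighbors :: "('v \<Rightarrow> 'v \<Rightarrow> real) \<Rightarrow> 'v \<Rightarrow> 'v set" where
  "neighbors \<mu> x = {y. \<mu> x y > 0}"

definition weighted_graph :: "('v \<Rightarrow> 'v \<Rightarrow> real) \<Rightarrow> bool" where
  "weighted_graph \<mu> \<longleftrightarrow> (\<forall>x y. \<mu> x y = \<mu> y x \<and> \<mu> x y \<ge> 0)"

definition locally_finite :: "('v \<Rightarrow> 'v \<Rightarrow> real) \<Rightarrow> bool" where
  "locally_finite \<mu> \<longleftrightarrow> (\<forall>x. finite (neighbors \<mu> x))"

definition connected_graph :: "('v \<Rightarrow> 'v \<Rightarrow> real) \<Rightarrow> bool" where
  "connected_graph \<mu> \<longleftrightarrow> (\<forall>x y. (x, y) \<in> {(a, b). \<mu> a b > 0}\<^sup>*)"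

definition vweight :: "('v \<Rightarrow> 'v \<Rightarrow> real) \<Rightarrow> 'v \<Rightarrow> real" where
  "vweight \<mu> x = (\<Sum>y\<in>neighbors \<mu> x. \<mu> x y)"

definition trans_prob :: "('v \<Rightarrow> 'v \<Rightarrow> real) \<Rightarrow> 'v \<Rightarrow> 'v \<Rightarrow> real" where
  "trans_prob \<mu> x y = \<mu> x y / vweight \<mu> x"

text \<open>n-step transition probabilities P_n(x,y) = P_x[X_n = y]\<close>
fun nstep :: "('v \<Rightarrow> 'v \<Rightarrow> real) \<Rightarrow> nat \<Rightarrow> 'v \<Rightarrow> 'v \<Rightarrow> real" where
  "nstep \<mu> 0 x y = (if x = y then 1 else 0)"
| "nstep \<mu> (Suc n) x y = (\<Sum>z\<in>neighbors \<mu> x. trans_prob \<mu> x z * nstep \<mu> n z y)"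

definition green :: "('v \<Rightarrow> 'v \<Rightarrow> real) \<Rightarrow> 'v \<Rightarrow> 'v \<Rightarrow> ennreal" where
  "green \<mu> x y = (\<Sum>n. ennreal (nstep \<mu> n x y)) / ennreal (vweight \<mu> y)"

definition green_op :: "('v \<Rightarrow> 'v \<Rightarrow> real) \<Rightarrow> ('v \<Rightarrow> real) \<Rightarrow> 'v \<Rightarrow> ennreal" where
  "green_op \<mu> f x = (\<Sum>\<^sub>\<infinity>y\<in>UNIV. green \<mu> x y * ennreal (f y) * ennreal (vweight \<mu> y))"

end

theory Submission
  imports Defs
begin

lemma tangent_powr:
  fixes c x s :: real assumes "c > 0" "x \<ge> 0" "s \<ge> 1"
  shows "c powr s + s * c powr (s - 1) * (x - c) \<le> x powr s"
proof (cases "x = 0")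
  case True
  have "c powr (s - 1) * c = c powr s"
    using assms by (simp add: powr_diff)
  then have "s * c powr (s - 1) * (x - c) = - s * c powr s" using True by (simp add: algebra_simps)
  moreover have "c powr s \<ge> 0" by simp
  ultimately show ?thesis using True assms by (simp add: algebra_simps)
next
  case False
  have d: "((\<lambda>z. z powr s) has_field_derivative s * c powr (s - 1)) (at c within {0<..})"
    by (rule has_field_derivative_at_within, rule has_real_derivative_powr) (use assms in auto)
  have "(\<lambda>z. z powr s) x - (\<lambda>z. z powr s) c \<ge> s * c powr (s - 1) * (x - c)"
    by (rule convex_on_imp_above_tangent[OF powr_convex[OF assms(3)] _ _ _ d])
       (use assms False in \<open>auto simp: convex_connected interior_open\<close>)
  then show ?thesis by simp
qed

lemma jensen_powr:
  fixes p y :: "'a \<Rightarrow> real"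
  assumes "finite A" "(\<Sum>z\<in>A. p z) = 1" "\<And>z. z\<in>A \<Longrightarrow> p z \<ge> 0" "\<And>z. z\<in>A \<Longrightarrow> y z \<ge> 0" "s \<ge> 1"
  shows "(\<Sum>z\<in>A. p z * y z) powr s \<le> (\<Sum>z\<in>A. p z * y z powr s)"
proof (cases "(\<Sum>z\<in>A. p z * y z) = 0")
  case True
  then show ?thesis using assms by (auto intro!: sum_nonneg)
next
  case False
  define m where "m = (\<Sum>z\<in>A. p z * y z)"
  have "m \<ge> 0" unfolding m_def using assms by (auto intro!: sum_nonneg)
  with False have m: "m > 0" unfolding m_def by auto
  have "(\<Sum>z\<in>A. p z * (m powr s + s * m powr (s - 1) * (y z - m))) \<le> (\<Sum>z\<in>A. p z * y z powr s)"
    by (intro sum_mono mult_left_mono tangent_powr) (use assms m in auto)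
  moreover have "(\<Sum>z\<in>A. p z * (m powr s + s * m powr (s - 1) * (y z - m)))
     = m powr s * (\<Sum>z\<in>A. p z) + s * m powr (s - 1) * (\<Sum>z\<in>A. p z * y z) - s * m powr (s - 1) * m * (\<Sum>z\<in>A. p z)"
  proof -
    have "(\<Sum>z\<in>A. p z * (m powr s + s * m powr (s - 1) * (y z - m)))
      = (\<Sum>z\<in>A. m powr s * p z + s * m powr (s - 1) * (p z * y z) - s * m powr (s - 1) * m * p z)"
      by (intro sum.cong refl) (simp add: algebra_simps)
    also have "\<dots> = m powr s * (\<Sum>z\<in>A. p z) + s * m powr (s - 1) * (\<Sum>z\<in>A. p z * y z) - s * m powr (s - 1) * m * (\<Sum>z\<in>A. p z)"
      by (simp add: sum.distrib sum_subtractf sum_distrib_left)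
    finally show ?thesis .
  qed
  ultimately show ?thesis using assms(2) unfolding m_def[symmetric] by simp
qed

lemma ennsum[simp]: "(f::'a \<Rightarrow> ennreal) summable_on B"
  by (rule nonneg_summable_on_complete) auto

lemma infsum_ennreal_cmult:
  fixes g :: "'a \<Rightarrow> ennreal"
  shows "(\<Sum>\<^sub>\<infinity>y\<in>A. c * g y) = c * (\<Sum>\<^sub>\<infinity>y\<in>A. g y)"
proof -
  have "(\<Sum>\<^sub>\<infinity>y\<in>A. c * g y) = (SUP F\<in>{F. finite F \<and> F\<subseteq>A}. \<Sum>y\<in>F. c * g y)"
    by (rule nonneg_infsum_complete) auto
  also have "\<dots> = c * (SUP F\<in>{F. finite F \<and> F\<subseteq>A}. \<Sum>y\<in>F. g y)"
    by (simp add: SUP_mult_left_ennreal sum_distrib_left)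
  also have "(SUP F\<in>{F. finite F \<and> F\<subseteq>A}. \<Sum>y\<in>F. g y) = (\<Sum>\<^sub>\<infinity>y\<in>A. g y)"
    by (rule nonneg_infsum_complete[symmetric]) auto
  finally show ?thesis .
qed

lemma infsum_ennreal_sum:
  fixes g :: "'b \<Rightarrow> 'a \<Rightarrow> ennreal"
  shows "finite A \<Longrightarrow> (\<Sum>\<^sub>\<infinity>y\<in>B. (\<Sum>z\<in>A. g z y)) = (\<Sum>z\<in>A. \<Sum>\<^sub>\<infinity>y\<in>B. g z y)"
proof (induction A rule: finite_induct)
  case (insert x F)
  have "(\<Sum>\<^sub>\<infinity>y\<in>B. g x y + (\<Sum>z\<in>F. g z y)) = (\<Sum>\<^sub>\<infinity>y\<in>B. g x y) + (\<Sum>\<^sub>\<infinity>y\<in>B. (\<Sum>z\<in>F. g z y))"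
    by (rule infsum_add) (rule ennsum)+
  then show ?case using insert by simp
qed simp

lemma infsum_suminf_swap:
  fixes g :: "nat \<Rightarrow> 'a \<Rightarrow> ennreal"
  shows "(\<Sum>\<^sub>\<infinity>y\<in>A. (\<Sum>n. g n y)) = (\<Sum>n. \<Sum>\<^sub>\<infinity>y\<in>A. g n y)"
proof (rule antisym)
  have le: "sum f F \<le> infsum f A" if "finite F" "F \<subseteq> A" for f :: "'a \<Rightarrow> ennreal" and F
  proof -
    have "infsum f A = (SUP F\<in>{F. finite F \<and> F\<subseteq>A}. sum f F)"
      by (rule nonneg_infsum_complete) auto
    then show ?thesis using that by (auto intro: SUP_upper)
  qed
  have "(\<Sum>\<^sub>\<infinity>y\<in>A. (\<Sum>n. g n y)) = (SUP F\<in>{F. finite F \<and> F\<subseteq>A}. \<Sum>y\<in>F. \<Sum>n. g n y)"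
    by (rule nonneg_infsum_complete) auto
  also have "\<dots> \<le> (\<Sum>n. \<Sum>\<^sub>\<infinity>y\<in>A. g n y)"
  proof (rule SUP_least)
    fix F assume F: "F \<in> {F. finite F \<and> F\<subseteq>A}"
    have "(\<Sum>y\<in>F. \<Sum>n. g n y) = (\<Sum>n. \<Sum>y\<in>F. g n y)" by (rule suminf_sum[symmetric]) auto
    also have "\<dots> \<le> (\<Sum>n. \<Sum>\<^sub>\<infinity>y\<in>A. g n y)"
      by (intro suminf_le le) (use F in auto)
    finally show "(\<Sum>y\<in>F. \<Sum>n. g n y) \<le> (\<Sum>n. \<Sum>\<^sub>\<infinity>y\<in>A. g n y)" .
  qed
  finally show "(\<Sum>\<^sub>\<infinity>y\<in>A. (\<Sum>n. g n y)) \<le> (\<Sum>n. \<Sum>\<^sub>\<infinity>y\<in>A. g n y)" .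
  show "(\<Sum>n. \<Sum>\<^sub>\<infinity>y\<in>A. g n y) \<le> (\<Sum>\<^sub>\<infinity>y\<in>A. (\<Sum>n. g n y))"
  proof (rule suminf_le_const)
    fix N
    have "(\<Sum>n<N. \<Sum>\<^sub>\<infinity>y\<in>A. g n y) = (\<Sum>\<^sub>\<infinity>y\<in>A. \<Sum>n<N. g n y)"
      by (rule infsum_ennreal_sum[symmetric]) auto
    also have "\<dots> \<le> (\<Sum>\<^sub>\<infinity>y\<in>A. (\<Sum>n. g n y))"
      by (intro infsum_mono sum_le_suminf ennsum) auto
    finally show "(\<Sum>n<N. \<Sum>\<^sub>\<infinity>y\<in>A. g n y) \<le> (\<Sum>\<^sub>\<infinity>y\<in>A. (\<Sum>n. g n y))" .
  qed auto
qed

definition Pop :: "('v \<Rightarrow> 'v \<Rightarrow> real) \<Rightarrow> ('v \<Rightarrow> real) \<Rightarrow> 'v \<Rightarrow> real" where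
  "Pop \<mu> f x = (\<Sum>z\<in>neighbors \<mu> x. trans_prob \<mu> x z * f z)"

fun Qop :: "('v \<Rightarrow> 'v \<Rightarrow> real) \<Rightarrow> nat \<Rightarrow> ('v \<Rightarrow> real) \<Rightarrow> 'v \<Rightarrow> real" where
  "Qop \<mu> 0 f = f"
| "Qop \<mu> (Suc k) f = Pop \<mu> (Qop \<mu> k f)"

lemma vweight_nonneg: "weighted_graph \<mu> \<Longrightarrow> vweight \<mu> x \<ge> 0"
  unfolding vweight_def neighbors_def by (intro sum_nonneg) auto

lemma trans_prob_nonneg: "weighted_graph \<mu> \<Longrightarrow> trans_prob \<mu> x y \<ge> 0"
  unfolding trans_prob_def using vweight_nonneg[of \<mu> x] by (auto simp: weighted_graph_def)

lemma Pop_nonneg: "weighted_graph \<mu> \<Longrightarrow> (\<And>z. f z \<ge> 0) \<Longrightarrow> Pop \<mu> f x \<ge> 0"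
  unfolding Pop_def by (intro sum_nonneg mult_nonneg_nonneg trans_prob_nonneg) auto

lemma Pop_mono: "weighted_graph \<mu> \<Longrightarrow> (\<And>z. f z \<le> g z) \<Longrightarrow> Pop \<mu> f x \<le> Pop \<mu> g x"
  unfolding Pop_def by (intro sum_mono mult_left_mono trans_prob_nonneg) auto

lemma Pop_sum: "Pop \<mu> (\<lambda>z. \<Sum>k\<in>A. F k z) x = (\<Sum>k\<in>A. Pop \<mu> (F k) x)"
  unfolding Pop_def by (simp add: sum_distrib_left) (rule sum.swap)

lemma Qop_nonneg: "weighted_graph \<mu> \<Longrightarrow> (\<And>z. f z \<ge> 0) \<Longrightarrow> Qop \<mu> k f x \<ge> 0"
  by (induction k arbitrary: x) (auto intro: Pop_nonneg)

lemma Qop_cmult: "Qop \<mu> k (\<lambda>z. c * f z) = (\<lambda>z. c * Qop \<mu> k f z)"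
  by (induction k) (auto simp: Pop_def sum_distrib_left mult_ac)

lemma nstep_nonneg: "weighted_graph \<mu> \<Longrightarrow> nstep \<mu> n x y \<ge> 0"
  by (induction n arbitrary: x) (auto intro!: sum_nonneg mult_nonneg_nonneg trans_prob_nonneg)

lemma nstep_infsum:
  assumes wg: "weighted_graph \<mu>" and lf: "locally_finite \<mu>" and f: "\<And>z. f z \<ge> 0"
  shows "(\<Sum>\<^sub>\<infinity>y\<in>UNIV. ennreal (nstep \<mu> n x y * f y)) = ennreal (Qop \<mu> n f x)"
proof (induction n arbitrary: x)
  case 0
  have "(\<Sum>\<^sub>\<infinity>y\<in>UNIV. ennreal (nstep \<mu> 0 x y * f y)) = (\<Sum>\<^sub>\<infinity>y\<in>{x}. ennreal (nstep \<mu> 0 x y * f y))"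
    by (rule infsum_cong_neutral) auto
  then show ?case by simp
next
  case (Suc n)
  let ?N = "neighbors \<mu> x"
  have fin: "finite ?N" using lf by (simp add: locally_finite_def)
  have eq: "ennreal (nstep \<mu> (Suc n) x y * f y) = (\<Sum>z\<in>?N. ennreal (trans_prob \<mu> x z) * ennreal (nstep \<mu> n z y * f y))" for y
  proof -
    have "(\<Sum>z\<in>?N. ennreal (trans_prob \<mu> x z) * ennreal (nstep \<mu> n z y * f y))
        = (\<Sum>z\<in>?N. ennreal (trans_prob \<mu> x z * (nstep \<mu> n z y * f y)))"
      by (intro sum.cong refl) (simp add: ennreal_mult trans_prob_nonneg[OF wg] nstep_nonneg[OF wg] f)
    also have "\<dots> = ennreal (\<Sum>z\<in>?N. trans_prob \<mu> x z * (nstep \<mu> n z y * f y))"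
      by (rule sum_ennreal) (simp add: trans_prob_nonneg[OF wg] nstep_nonneg[OF wg] f)
    also have "(\<Sum>z\<in>?N. trans_prob \<mu> x z * (nstep \<mu> n z y * f y)) = nstep \<mu> (Suc n) x y * f y"
      by (simp add: sum_distrib_right mult.assoc)
    finally show ?thesis by simp
  qed
  have "(\<Sum>\<^sub>\<infinity>y\<in>UNIV. ennreal (nstep \<mu> (Suc n) x y * f y))
      = (\<Sum>\<^sub>\<infinity>y\<in>UNIV. \<Sum>z\<in>?N. ennreal (trans_prob \<mu> x z) * ennreal (nstep \<mu> n z y * f y))"
    by (rule infsum_cong) (rule eq)
  also have "\<dots> = (\<Sum>z\<in>?N. \<Sum>\<^sub>\<infinity>y\<in>UNIV. ennreal (trans_prob \<mu> x z) * ennreal (nstep \<mu> n z y * f y))"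
    by (rule infsum_ennreal_sum[OF fin])
  also have "\<dots> = (\<Sum>z\<in>?N. ennreal (trans_prob \<mu> x z) * ennreal (Qop \<mu> n f z))"
  proof (intro sum.cong refl)
    fix z
    show "(\<Sum>\<^sub>\<infinity>y\<in>UNIV. ennreal (trans_prob \<mu> x z) * ennreal (nstep \<mu> n z y * f y)) = ennreal (trans_prob \<mu> x z) * ennreal (Qop \<mu> n f z)"
      by (simp add: infsum_ennreal_cmult Suc)
  qed
  also have "\<dots> = (\<Sum>z\<in>?N. ennreal (trans_prob \<mu> x z * Qop \<mu> n f z))"
    by (intro sum.cong refl) (simp add: ennreal_mult trans_prob_nonneg[OF wg] Qop_nonneg[OF wg] f)
  also have "\<dots> = ennreal (Qop \<mu> (Suc n) f x)"
    by (simp add: Pop_def trans_prob_nonneg[OF wg] Qop_nonneg[OF wg] f)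
  finally show ?case .
qed

lemma green_op_eq:
  assumes wg: "weighted_graph \<mu>" and lf: "locally_finite \<mu>" and pos: "\<And>y. vweight \<mu> y > 0"
    and f: "\<And>z. f z \<ge> 0"
  shows "green_op \<mu> f x = (\<Sum>k. ennreal (Qop \<mu> k f x))"
proof -
  have "green_op \<mu> f x = (\<Sum>\<^sub>\<infinity>y\<in>UNIV. \<Sum>n. ennreal (nstep \<mu> n x y * f y))"
    unfolding green_op_def green_def
  proof (rule infsum_cong)
    fix y
    let ?a = "(\<Sum>n. ennreal (nstep \<mu> n x y))" and ?w = "ennreal (vweight \<mu> y)"
    have w: "?w \<noteq> 0" "?w < top" using pos[of y] by auto
    have "?a / ?w * ennreal (f y) * ?w = ?a * ennreal (f y) * (?w / ?w)"
      by (simp add: ennreal_divide_times ennreal_times_divide mult_ac)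
    also have "\<dots> = ?a * ennreal (f y)" using w by simp
    also have "\<dots> = (\<Sum>n. ennreal (nstep \<mu> n x y * f y))"
      by (simp add: ennreal_mult nstep_nonneg[OF wg] f)
    finally show "?a / ?w * ennreal (f y) * ?w = (\<Sum>n. ennreal (nstep \<mu> n x y * f y))" .
  qed
  also have "\<dots> = (\<Sum>n. \<Sum>\<^sub>\<infinity>y\<in>UNIV. ennreal (nstep \<mu> n x y * f y))"
    by (rule infsum_suminf_swap)
  also have "\<dots> = (\<Sum>k. ennreal (Qop \<mu> k f x))"
    by (simp add: nstep_infsum[OF wg lf f])
  finally show ?thesis .
qed

lemma vweight_pos:
  assumes wg: "weighted_graph \<mu>" and inf: "infinite (UNIV :: 'v set)"
    and conn: "connected_graph \<mu>" and lf: "locally_finite \<mu>"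
  shows "vweight \<mu> (x::'v) > 0"
proof -
  have "UNIV \<noteq> {x}" using inf by (metis finite.emptyI finite.insertI)
  then obtain y where "y \<noteq> x" by auto
  have "(x, y) \<in> {(a, b). \<mu> a b > 0}\<^sup>*" using conn by (simp add: connected_graph_def)
  then obtain z where z: "\<mu> x z > 0" using \<open>y \<noteq> x\<close> by (cases rule: converse_rtranclE) auto
  have "z \<in> neighbors \<mu> x" using z by (simp add: neighbors_def)
  then show ?thesis unfolding vweight_def
    using lf by (intro sum_pos) (auto simp: locally_finite_def neighbors_def)
qed

theorem lemma4p1:
  fixes \<mu> :: "'v \<Rightarrow> 'v \<Rightarrow> real" and s :: real and \<sigma> :: "'v \<Rightarrow> real"
  assumes "weighted_graph \<mu>" and "infinite (UNIV :: 'v set)"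
    and "connected_graph \<mu>" and "locally_finite \<mu>"
    and "1 < s"
    and "\<forall>x. \<sigma> x \<ge> 0"
    and "\<forall>x. green_op \<mu> \<sigma> x < \<infinity>"
  shows "\<forall>x. ennreal (enn2real (green_op \<mu> \<sigma> x) powr s)
           \<le> ennreal s * green_op \<mu> (\<lambda>y. enn2real (green_op \<mu> \<sigma> y) powr (s - 1) * \<sigma> y) x"
proof
  fix x0
  have wg: "weighted_graph \<mu>" and lf: "locally_finite \<mu>" and s1: "1 < s" using assms by auto
  have sig: "\<And>x. \<sigma> x \<ge> 0" using assms by auto
  have pos: "\<And>y. vweight \<mu> y > 0" using vweight_pos[OF assms(1-4)] by blast
  have fin: "\<And>x. finite (neighbors \<mu> x)" using lf by (simp add: locally_finite_def)
  have sumP: "(\<Sum>z\<in>neighbors \<mu> x. trans_prob \<mu> x z) = 1" for x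
  proof -
    have "(\<Sum>z\<in>neighbors \<mu> x. trans_prob \<mu> x z) = (\<Sum>z\<in>neighbors \<mu> x. \<mu> x z) / vweight \<mu> x"
      unfolding trans_prob_def by (simp add: sum_divide_distrib)
    also have "\<dots> = 1" using pos[of x] by (simp add: vweight_def)
    finally show ?thesis .
  qed
  define G where "G x = enn2real (green_op \<mu> \<sigma> x)" for x
  have geq: "\<And>x. green_op \<mu> \<sigma> x = (\<Sum>k. ennreal (Qop \<mu> k \<sigma> x))"
    by (rule green_op_eq[OF wg lf pos]) (rule sig)
  have Qs_nonneg: "\<And>k x. Qop \<mu> k \<sigma> x \<ge> 0" by (rule Qop_nonneg[OF wg]) (rule sig)
  have summ: "summable (\<lambda>k. Qop \<mu> k \<sigma> x)" for x
  proof (rule summable_suminf_not_top)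
    show "(\<Sum>k. ennreal (Qop \<mu> k \<sigma> x)) \<noteq> top"
      using assms(7) geq[of x] by (metis less_irrefl infinity_ennreal_def)
  qed (rule Qs_nonneg)
  have Gx: "G x = (\<Sum>k. Qop \<mu> k \<sigma> x)" for x
    unfolding G_def geq using summ[of x] Qs_nonneg
    by (simp add: suminf_ennreal2 suminf_nonneg)
  define v where "v n x = (\<Sum>k<n. Qop \<mu> k \<sigma> x)" for n x
  have v_nonneg: "v n x \<ge> 0" for n x unfolding v_def by (intro sum_nonneg Qs_nonneg)
  have v_le: "v n x \<le> G x" for n x
    unfolding v_def Gx using summ Qs_nonneg by (intro sum_le_suminf) auto
  have v_Suc: "v (Suc n) x = \<sigma> x + Pop \<mu> (v n) x" for n x
  proof -
    have "v (Suc n) x = Qop \<mu> 0 \<sigma> x + (\<Sum>k<n. Qop \<mu> (Suc k) \<sigma> x)"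
      unfolding v_def by (rule sum.lessThan_Suc_shift)
    also have "\<dots> = \<sigma> x + Pop \<mu> (\<lambda>z. \<Sum>k<n. Qop \<mu> k \<sigma> z) x"
      by (simp add: Pop_sum)
    finally show ?thesis unfolding v_def .
  qed
  define g where "g y = G y powr (s - 1) * \<sigma> y" for y
  define h where "h y = s * g y" for y
  have g_nonneg: "g y \<ge> 0" for y unfolding g_def using sig by simp
  have h_nonneg: "h y \<ge> 0" for y unfolding h_def using g_nonneg s1 by simp
  have main: "\<forall>x. v n x powr s \<le> (\<Sum>k<n. Qop \<mu> k h x)" for n
  proof (induction n)
    case 0
    then show ?case using s1 by (simp add: v_def)
  next
    case (Suc n)
    show ?case
    proof
      fix x
      define a where "a = v (Suc n) x"
      define b where "b = Pop \<mu> (v n) x"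
      have b0: "b \<ge> 0" unfolding b_def by (rule Pop_nonneg[OF wg v_nonneg])
      have ab: "a = \<sigma> x + b" unfolding a_def b_def by (rule v_Suc)
      have aG: "a \<le> G x" unfolding a_def by (rule v_le)
      have T1: "a powr s \<le> b powr s + h x"
      proof (cases "a = 0")
        case True
        then show ?thesis using h_nonneg[of x] by simp
      next
        case False
        then have a0: "a > 0" using ab b0 sig[of x] by auto
        have "a powr s + s * a powr (s - 1) * (b - a) \<le> b powr s"
          by (rule tangent_powr) (use a0 b0 s1 in auto)
        then have "a powr s \<le> b powr s + s * a powr (s - 1) * \<sigma> x" using ab by (simp add: algebra_simps)
        moreover have "s * a powr (s - 1) * \<sigma> x \<le> h x"
        proof -
          have "a powr (s - 1) \<le> G x powr (s - 1)" using s1 a0 aG by (intro powr_mono2) auto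
          then have "s * a powr (s - 1) * \<sigma> x \<le> s * G x powr (s - 1) * \<sigma> x"
            using s1 sig[of x] by (intro mult_right_mono mult_left_mono) auto
          then show ?thesis unfolding h_def g_def by (simp add: mult.assoc)
        qed
        ultimately show ?thesis by linarith
      qed
      have T2: "b powr s \<le> Pop \<mu> (\<lambda>z. v n z powr s) x"
        unfolding b_def Pop_def
        by (rule jensen_powr) (use fin sumP trans_prob_nonneg[OF wg] v_nonneg s1 in auto)
      have T3: "Pop \<mu> (\<lambda>z. v n z powr s) x \<le> (\<Sum>k<n. Qop \<mu> (Suc k) h x)"
      proof -
        have "Pop \<mu> (\<lambda>z. v n z powr s) x \<le> Pop \<mu> (\<lambda>z. \<Sum>k<n. Qop \<mu> k h z) x"
          by (rule Pop_mono[OF wg]) (use Suc.IH in auto)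
        then show ?thesis by (simp add: Pop_sum)
      qed
      have "(\<Sum>k<Suc n. Qop \<mu> k h x) = h x + (\<Sum>k<n. Qop \<mu> (Suc k) h x)"
        by (subst sum.lessThan_Suc_shift) simp
      then show "v (Suc n) x powr s \<le> (\<Sum>k<Suc n. Qop \<mu> k h x)"
        using T1 T2 T3 unfolding a_def[symmetric] by linarith
    qed
  qed
  have Qh: "Qop \<mu> k h x = s * Qop \<mu> k g x" for k x
    unfolding h_def by (simp add: Qop_cmult)
  have gq: "green_op \<mu> g x0 = (\<Sum>k. ennreal (Qop \<mu> k g x0))"
    by (rule green_op_eq[OF wg lf pos]) (rule g_nonneg)
  have lim: "(\<lambda>n. v n x0) \<longlonglongrightarrow> G x0"
    unfolding v_def Gx by (rule summable_LIMSEQ[OF summ])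
  have lim2: "(\<lambda>n. v n x0 powr s) \<longlonglongrightarrow> G x0 powr s"
    by (rule tendsto_powr'[OF lim tendsto_const]) (use s1 v_nonneg in auto)
  have lim3: "(\<lambda>n. ennreal (v n x0 powr s)) \<longlonglongrightarrow> ennreal (G x0 powr s)"
    by (rule tendsto_ennrealI[OF lim2])
  have bound: "ennreal (v n x0 powr s) \<le> ennreal s * green_op \<mu> g x0" for n
  proof -
    have "ennreal (v n x0 powr s) \<le> ennreal (\<Sum>k<n. Qop \<mu> k h x0)"
      using main[of n] by (simp add: ennreal_leI)
    also have "\<dots> = ennreal s * (\<Sum>k<n. ennreal (Qop \<mu> k g x0))"
      using s1 by (simp add: Qh sum_distrib_left[symmetric] Qop_nonneg[OF wg g_nonneg] ennreal_mult sum_nonneg)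
    also have "\<dots> \<le> ennreal s * green_op \<mu> g x0"
      unfolding gq by (intro mult_left_mono sum_le_suminf) auto
    finally show ?thesis .
  qed
  have "ennreal (G x0 powr s) \<le> ennreal s * green_op \<mu> g x0"
    by (rule LIMSEQ_le_const2[OF lim3]) (use bound in auto)
  then show "ennreal (enn2real (green_op \<mu> \<sigma> x0) powr s)
           \<le> ennreal s * green_op \<mu> (\<lambda>y. enn2real (green_op \<mu> \<sigma> y) powr (s - 1) * \<sigma> y) x0"
    unfolding g_def G_def .
qed

end
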